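(* Let $A:\ell_2\to\ell_2$ be a bounded operator with matrix $(a_{m,n})_{m,n\ge0}$, $a_{m,n}=\langle Ae_n,e_m\rangle$, where $(e_n)$ is the canonical basis. Let $(d_n)_{n\ge0}$ be positive numbers such that for all $m,n$: $d_m<d_n\Rightarrow a_{m,n}=0$. Then the matrix $\big(d_m^{-1}a_{m,n}d_n\big)_{m,n}$ (i.e. $D^{-1}AD$ with $D$ the diagonal operator $De_n=d_ne_n$) defines a bounded operator on $\ell_2$ and $\|D^{-1}AD\|\le\|A\|$. *)

theory Defs
  imports "HOL-Analysis.Analysis"
begin

definition l2 :: "(nat \<Rightarrow> complex) set" where
  "l2 = {x. summable (\<lambda>n. (cmod (x n))\<^sup>2)}"

definition l2norm :: "(nat \<Rightarrow> complex) \<Rightarrow> real" where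
  "l2norm x = sqrt (\<Sum>n. (cmod (x n))\<^sup>2)"

definition ebasis :: "nat \<Rightarrow> nat \<Rightarrow> complex" where
  "ebasis n = (\<lambda>k. if k = n then 1 else 0)"

text \<open>Bounded linear operator on l2 (only its values on l2 matter).\<close>
definition bounded_op :: "((nat \<Rightarrow> complex) \<Rightarrow> (nat \<Rightarrow> complex)) \<Rightarrow> bool" where
  "bounded_op T \<longleftrightarrow>
     (\<forall>x\<in>l2. T x \<in> l2) \<and>
     (\<forall>x\<in>l2. \<forall>y\<in>l2. T (\<lambda>k. x k + y k) = (\<lambda>k. T x k + T y k)) \<and>
     (\<forall>x\<in>l2. \<forall>c. T (\<lambda>k. c * x k) = (\<lambda>k. c * T x k)) \<and>
     (\<exists>K. \<forall>x\<in>l2. l2norm (T x) \<le> K * l2norm x)"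

definition opnorm :: "((nat \<Rightarrow> complex) \<Rightarrow> (nat \<Rightarrow> complex)) \<Rightarrow> real" where
  "opnorm T = Sup {l2norm (T x) | x. x \<in> l2 \<and> l2norm x \<le> 1}"

definition matrix_entry :: "((nat \<Rightarrow> complex) \<Rightarrow> (nat \<Rightarrow> complex)) \<Rightarrow> nat \<Rightarrow> nat \<Rightarrow> complex" where
  "matrix_entry T m n = T (ebasis n) m"

end

theory Submission
  imports Defs
begin

definition good :: "nat \<Rightarrow> real \<Rightarrow> (nat \<Rightarrow> nat \<Rightarrow> complex) \<Rightarrow> bool" where
  "good N K c \<longleftrightarrow> (\<forall>x y. cmod (\<Sum>m<N. \<Sum>n<N. c m n * x n * cnj (y m))
      \<le> K * sqrt (\<Sum>n<N. (cmod (x n))\<^sup>2) * sqrt (\<Sum>m<N. (cmod (y m))\<^sup>2))"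

lemma goodD: "good N K c \<Longrightarrow> cmod (\<Sum>m<N. \<Sum>n<N. c m n * x n * cnj (y m))
      \<le> K * sqrt (\<Sum>n<N. (cmod (x n))\<^sup>2) * sqrt (\<Sum>m<N. (cmod (y m))\<^sup>2)"
  unfolding good_def by blast

lemma good_cong:
  assumes "good N K c" "\<And>m n. m < N \<Longrightarrow> n < N \<Longrightarrow> c m n = c' m n"
  shows "good N K c'"
  unfolding good_def
proof (intro allI)
  fix x y
  have "(\<Sum>m<N. \<Sum>n<N. c' m n * x n * cnj (y m)) = (\<Sum>m<N. \<Sum>n<N. c m n * x n * cnj (y m))"
    by (intro sum.cong refl) (simp add: assms(2))
  then show "cmod (\<Sum>m<N. \<Sum>n<N. c' m n * x n * cnj (y m))
      \<le> K * sqrt (\<Sum>n<N. (cmod (x n))\<^sup>2) * sqrt (\<Sum>m<N. (cmod (y m))\<^sup>2)"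
    using goodD[OF assms(1), of x y] by simp
qed

lemma good_convex:
  assumes "good N K c1" "good N K c2" "0 \<le> t" "t \<le> 1"
  shows "good N K (\<lambda>m n. of_real t * c1 m n + of_real (1 - t) * c2 m n)"
  unfolding good_def
proof (intro allI)
  fix x y
  let ?X = "sqrt (\<Sum>n<N. (cmod (x n))\<^sup>2)" and ?Y = "sqrt (\<Sum>m<N. (cmod (y m))\<^sup>2)"
  let ?S1 = "\<Sum>m<N. \<Sum>n<N. c1 m n * x n * cnj (y m)"
  let ?S2 = "\<Sum>m<N. \<Sum>n<N. c2 m n * x n * cnj (y m)"
  have eq: "(\<Sum>m<N. \<Sum>n<N. (of_real t * c1 m n + of_real (1 - t) * c2 m n) * x n * cnj (y m))
      = of_real t * ?S1 + of_real (1 - t) * ?S2"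
    by (simp add: distrib_right sum.distrib sum_distrib_left mult.assoc)
  have n1: "cmod (of_real t :: complex) = t" using assms by simp
  have n2: "cmod (of_real (1 - t) :: complex) = 1 - t" using assms(4) by (metis norm_of_real abs_of_nonneg diff_ge_0_iff_ge)
  have "cmod (of_real t * ?S1 + of_real (1 - t) * ?S2) \<le> cmod (of_real t * ?S1) + cmod (of_real (1 - t) * ?S2)"
    by (rule norm_triangle_ineq)
  also have "\<dots> = t * cmod ?S1 + (1 - t) * cmod ?S2" by (simp only: norm_mult n1 n2)
  also have "\<dots> \<le> t * (K * ?X * ?Y) + (1 - t) * (K * ?X * ?Y)"
    using assms goodD by (intro add_mono mult_left_mono) auto
  also have "\<dots> = K * ?X * ?Y" by (simp add: algebra_simps)
  finally show "cmod (\<Sum>m<N. \<Sum>n<N. (of_real t * c1 m n + of_real (1 - t) * c2 m n) * x n * cnj (y m)) \<le> K * ?X * ?Y"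
    by (simp only: eq)
qed

lemma good_sign:
  assumes "good N K c" "\<And>i. U i = 1 \<or> U i = -1"
  shows "good N K (\<lambda>m n. of_real (U m * U n) * c m n)"
  unfolding good_def
proof (intro allI)
  fix x y
  define x' :: "nat \<Rightarrow> complex" where "x' n = of_real (U n) * x n" for n
  define y' :: "nat \<Rightarrow> complex" where "y' n = of_real (U n) * y n" for n
  have u: "\<bar>U i\<bar> = 1" for i using assms(2)[of i] by auto
  have nx: "cmod (x' n) = cmod (x n)" for n unfolding x'_def by (simp add: norm_mult u)
  have ny: "cmod (y' n) = cmod (y n)" for n unfolding y'_def by (simp add: norm_mult u)
  have "(\<Sum>m<N. \<Sum>n<N. of_real (U m * U n) * c m n * x n * cnj (y m))
       = (\<Sum>m<N. \<Sum>n<N. c m n * x' n * cnj (y' m))"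
    unfolding x'_def y'_def by (intro sum.cong refl) (simp add: mult_ac)
  then show "cmod (\<Sum>m<N. \<Sum>n<N. of_real (U m * U n) * c m n * x n * cnj (y m))
         \<le> K * sqrt (\<Sum>n<N. (cmod (x n))\<^sup>2) * sqrt (\<Sum>m<N. (cmod (y m))\<^sup>2)"
    using goodD[OF assms(1), of x' y'] by (simp add: nx ny)
qed

lemma good_step:
  fixes d :: "nat \<Rightarrow> real"
  assumes g: "good N K c" and z: "\<And>m n. d m < \<theta> \<Longrightarrow> \<theta> \<le> d n \<Longrightarrow> c m n = 0"
    and t: "0 < t" "t \<le> 1"
  shows "good N K (\<lambda>m n. c m n * of_real ((if d n < \<theta> then t else 1) / (if d m < \<theta> then t else 1)))"
proof -
  define U where "U i = (if d i < \<theta> then -1 else (1::real))" for i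
  have gs: "good N K (\<lambda>m n. of_real (U m * U n) * c m n)"
    by (rule good_sign[OF g]) (simp add: U_def)
  have g2: "good N K (\<lambda>m n. of_real (1/2) * c m n + of_real (1 - 1/2) * (of_real (U m * U n) * c m n))"
    by (rule good_convex[OF g gs]) auto
  have g3: "good N K (\<lambda>m n. of_real t * c m n + of_real (1 - t) *
     (of_real (1/2) * c m n + of_real (1 - 1/2) * (of_real (U m * U n) * c m n)))"
    by (rule good_convex[OF g g2]) (use t in auto)
  show ?thesis
  proof (rule good_cong[OF g3])
    fix m n
    show "of_real t * c m n + of_real (1 - t) *
     (of_real (1/2) * c m n + of_real (1 - 1/2) * (of_real (U m * U n) * c m n))
      = c m n * of_real ((if d n < \<theta> then t else 1) / (if d m < \<theta> then t else 1))"
    proof (cases "d m < \<theta>"; cases "d n < \<theta>")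
      assume "d m < \<theta>" "\<not> d n < \<theta>"
      then have "c m n = 0" using z by simp
      then show ?thesis by simp
    next
      assume "d m < \<theta>" "d n < \<theta>"
      then show ?thesis using t by (simp add: U_def algebra_simps)
    next
      assume "\<not> d m < \<theta>" "d n < \<theta>"
      then show ?thesis using t by (simp add: U_def algebra_simps)
    next
      assume "\<not> d m < \<theta>" "\<not> d n < \<theta>"
      then show ?thesis using t by (simp add: U_def algebra_simps)
    qed
  qed
qed

inductive reach :: "(real \<Rightarrow> real) \<Rightarrow> bool" where
  reach_one: "reach (\<lambda>_. 1)"
| reach_step: "reach \<phi> \<Longrightarrow> 0 < t \<Longrightarrow> t \<le> 1 \<Longrightarrow> reach (\<lambda>x. \<phi> x * (if x < \<theta> then t else 1))"

lemma reach_pos: "reach \<phi> \<Longrightarrow> \<phi> x > 0"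
  by (induction rule: reach.induct) auto

lemma reach_good:
  fixes d :: "nat \<Rightarrow> real"
  assumes "reach \<phi>" "good N K a" "\<And>m n. d m < d n \<Longrightarrow> a m n = 0"
  shows "good N K (\<lambda>m n. a m n * of_real (\<phi> (d n) / \<phi> (d m)))"
  using assms(1)
proof (induction rule: reach.induct)
  case reach_one
  then show ?case using assms(2) by simp
next
  case (reach_step \<phi> t \<theta>)
  have z: "a m n * of_real (\<phi> (d n) / \<phi> (d m)) = 0" if "d m < \<theta>" "\<theta> \<le> d n" for m n
    using assms(3)[of m n] that by simp
  have "good N K (\<lambda>m n. (a m n * of_real (\<phi> (d n) / \<phi> (d m))) *
      of_real ((if d n < \<theta> then t else 1) / (if d m < \<theta> then t else 1)))"
    by (rule good_step[OF reach_step.IH z reach_step.hyps(2,3)])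
  then show ?case
    by (rule good_cong) (simp add: field_simps)
qed

lemma reach_exists:
  assumes "finite V" "\<forall>v\<in>V. v > 0"
  shows "\<exists>\<phi> c k. reach \<phi> \<and> c > 0 \<and> k > 0 \<and> (\<forall>x. (\<forall>v\<in>V. v \<le> x) \<longrightarrow> \<phi> x = c)
     \<and> (\<forall>v\<in>V. \<phi> v = k * v)"
  using assms
proof (induction V rule: finite_linorder_max_induct)
  case empty
  show ?case by (intro exI[of _ "\<lambda>_. 1"] exI[of _ 1]) (auto intro: reach_one)
next
  case (insert b A)
  then obtain \<phi> c k where h: "reach \<phi>" "c > 0" "k > 0" "\<forall>x. (\<forall>v\<in>A. v \<le> x) \<longrightarrow> \<phi> x = c"
      "\<forall>v\<in>A. \<phi> v = k * v" by auto
  have bpos: "b > 0" using insert by auto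
  show ?case
  proof (cases "A = {}")
    case True
    have all: "\<phi> x = c" for x using h(4) True by simp
    have 1: "c / b > 0" using h bpos by auto
    have 2: "\<forall>x. (\<forall>v\<in>insert b A. v \<le> x) \<longrightarrow> \<phi> x = c" using all by simp
    have 3: "\<forall>v\<in>insert b A. \<phi> v = c / b * v" using all True bpos by simp
    show ?thesis using h(1,2) 1 2 3 by blast
  next
    case False
    define M where "M = Max A"
    have MA: "M \<in> A" using False insert(1) M_def by simp
    have Mle: "\<forall>v\<in>A. v \<le> M" using insert(1) M_def by simp
    have Mb: "M < b" using MA insert(2) by auto
    have Mpos: "M > 0" using MA insert by auto
    have cM: "c = k * M" using h(4) h(5) MA Mle by metis
    define t where "t = M / b"
    have t: "0 < t" "t \<le> 1" using Mpos Mb bpos unfolding t_def by auto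
    let ?\<psi> = "\<lambda>x. \<phi> x * (if x < b then t else 1)"
    show ?thesis
    proof (rule exI[of _ ?\<psi>], rule exI[of _ c], rule exI[of _ "k * t"], intro conjI)
      show "reach ?\<psi>" by (rule reach_step[OF h(1) t])
      show "c > 0" using h by auto
      show "k * t > 0" using h t by auto
      show "\<forall>x. (\<forall>v\<in>insert b A. v \<le> x) \<longrightarrow> ?\<psi> x = c"
        using h(4) by auto
      show "\<forall>v\<in>insert b A. ?\<psi> v = k * t * v"
      proof
        fix v assume v: "v \<in> insert b A"
        show "?\<psi> v = k * t * v"
        proof (cases "v = b")
          case True
          have "\<phi> b = c" using h(4) insert(2) by force
          then show ?thesis using True cM bpos by (simp add: t_def)
        next
          case False
          then have "v \<in> A" using v by auto
          then show ?thesis using h(5) insert(2) by auto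
        qed
      qed
    qed
  qed
qed

lemma cs_sqrt:
  fixes f g :: "nat \<Rightarrow> real"
  shows "(\<Sum>i\<in>I. f i * g i) \<le> sqrt (\<Sum>i\<in>I. (f i)\<^sup>2) * sqrt (\<Sum>i\<in>I. (g i)\<^sup>2)"
proof -
  have "(\<Sum>i\<in>I. f i * g i) \<le> \<bar>\<Sum>i\<in>I. f i * g i\<bar>" by simp
  also have "\<dots> = sqrt ((\<Sum>i\<in>I. f i * g i)\<^sup>2)" by (simp add: real_sqrt_abs)
  also have "\<dots> \<le> sqrt ((\<Sum>i\<in>I. (f i)\<^sup>2) * (\<Sum>i\<in>I. (g i)\<^sup>2))"
    by (rule real_sqrt_le_mono[OF Cauchy_Schwarz_ineq_sum])
  also have "\<dots> = sqrt (\<Sum>i\<in>I. (f i)\<^sup>2) * sqrt (\<Sum>i\<in>I. (g i)\<^sup>2)"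
    by (simp add: real_sqrt_mult)
  finally show ?thesis .
qed

definition trunc :: "(nat \<Rightarrow> complex) \<Rightarrow> nat \<Rightarrow> nat \<Rightarrow> complex" where
  "trunc x N = (\<lambda>k. if k < N then x k else 0)"

lemma trunc_l2: "trunc x N \<in> l2"
  unfolding l2_def trunc_def mem_Collect_eq by (rule summable_finite[of "{..<N}"]) auto

lemma l2norm_trunc: "l2norm (trunc x N) = sqrt (\<Sum>n<N. (cmod (x n))\<^sup>2)"
proof -
  have "(\<Sum>n. (cmod (trunc x N n))\<^sup>2) = (\<Sum>n<N. (cmod (trunc x N n))\<^sup>2)"
    by (rule suminf_finite) (auto simp: trunc_def)
  also have "\<dots> = (\<Sum>n<N. (cmod (x n))\<^sup>2)" by (simp add: trunc_def)
  finally have "(\<Sum>n. (cmod (trunc x N n))\<^sup>2) = (\<Sum>n<N. (cmod (x n))\<^sup>2)" .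
  then show ?thesis unfolding l2norm_def by simp
qed

lemma zero_l2: "(\<lambda>k. 0) \<in> l2" unfolding l2_def by simp

lemma single_l2: "(\<lambda>k. c * ebasis n k) \<in> l2"
  unfolding l2_def ebasis_def mem_Collect_eq by (rule summable_finite[of "{n}"]) auto

lemma ebasis_l2: "ebasis n \<in> l2"
  using single_l2[of 1 n] by simp

lemma bounded_opD:
  assumes "bounded_op A"
  shows "x \<in> l2 \<Longrightarrow> A x \<in> l2"
    "x \<in> l2 \<Longrightarrow> y \<in> l2 \<Longrightarrow> A (\<lambda>k. x k + y k) = (\<lambda>k. A x k + A y k)"
    "x \<in> l2 \<Longrightarrow> A (\<lambda>k. c * x k) = (\<lambda>k. c * A x k)"
  using assms unfolding bounded_op_def by blast+

lemma A_zero: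
  assumes "bounded_op A" shows "A (\<lambda>k. 0) = (\<lambda>k. 0)"
proof -
  have "A (\<lambda>k. 0 * 0) = (\<lambda>k. 0 * A (\<lambda>k. 0) k)"
    by (rule bounded_opD(3)[OF assms zero_l2])
  then show ?thesis by simp
qed

lemma A_trunc:
  assumes "bounded_op A"
  shows "A (trunc x N) = (\<lambda>m. \<Sum>n<N. x n * A (ebasis n) m)"
proof (induction N)
  case 0
  have "trunc x 0 = (\<lambda>k. 0)" by (simp add: trunc_def)
  then show ?case using A_zero[OF assms] by simp
next
  case (Suc N)
  have e: "trunc x (Suc N) = (\<lambda>k. trunc x N k + (\<lambda>k. x N * ebasis N k) k)"
    unfolding trunc_def ebasis_def by (rule ext) (simp add: less_Suc_eq)
  have add: "A (\<lambda>k. trunc x N k + (\<lambda>k. x N * ebasis N k) k) = (\<lambda>k. A (trunc x N) k + A (\<lambda>k. x N * ebasis N k) k)"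
    by (rule bounded_opD(2)[OF assms trunc_l2 single_l2])
  have sc: "A (\<lambda>k. x N * ebasis N k) = (\<lambda>k. x N * A (ebasis N) k)"
    by (rule bounded_opD(3)[OF assms ebasis_l2])
  show ?case unfolding e add sc Suc by simp
qed

lemma l2norm_nonneg: "x \<in> l2 \<Longrightarrow> l2norm x \<ge> 0" unfolding l2norm_def l2_def
  by (simp add: suminf_nonneg)

lemma l2norm_scale:
  assumes "x \<in> l2" shows "l2norm (\<lambda>k. c * x k) = cmod c * l2norm x"
proof -
  have s: "summable (\<lambda>n. (cmod (x n))\<^sup>2)" using assms by (simp add: l2_def)
  have "(\<Sum>n. (cmod (c * x n))\<^sup>2) = (cmod c)\<^sup>2 * (\<Sum>n. (cmod (x n))\<^sup>2)"
    by (simp add: norm_mult power_mult_distrib suminf_mult[OF s])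
  then show ?thesis unfolding l2norm_def by (simp add: real_sqrt_mult)
qed

lemma scale_l2: "x \<in> l2 \<Longrightarrow> (\<lambda>k. c * x k) \<in> l2"
  unfolding l2_def by (simp add: norm_mult power_mult_distrib summable_mult)

lemma l2norm_zero:
  assumes "x \<in> l2" "l2norm x = 0" shows "x = (\<lambda>k. 0)"
proof -
  have s: "summable (\<lambda>n. (cmod (x n))\<^sup>2)" using assms by (simp add: l2_def)
  have nn: "0 \<le> (\<Sum>n. (cmod (x n))\<^sup>2)" by (rule suminf_nonneg[OF s]) simp
  have "(\<Sum>n. (cmod (x n))\<^sup>2) = 0" using assms(2) nn unfolding l2norm_def by simp
  then have "\<forall>n. (cmod (x n))\<^sup>2 = 0" using suminf_eq_zero_iff[OF s] by simp
  then show ?thesis by auto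
qed

lemma opnorm_facts:
  assumes "bounded_op A"
  shows "0 \<le> opnorm A" "\<And>x. x \<in> l2 \<Longrightarrow> l2norm (A x) \<le> opnorm A * l2norm x"
proof -
  define S where "S = {l2norm (A x) | x. x \<in> l2 \<and> l2norm x \<le> 1}"
  obtain K0 where K0: "\<forall>x\<in>l2. l2norm (A x) \<le> K0 * l2norm x" using assms unfolding bounded_op_def by blast
  have bdd: "bdd_above S"
  proof (rule bdd_aboveI)
    fix r assume "r \<in> S"
    then obtain x where x: "r = l2norm (A x)" "x \<in> l2" "l2norm x \<le> 1" unfolding S_def by blast
    have "r \<le> K0 * l2norm x" using K0 x by simp
    also have "\<dots> \<le> \<bar>K0\<bar> * l2norm x" using l2norm_nonneg[OF x(2)] by (intro mult_right_mono) auto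
    also have "\<dots> \<le> \<bar>K0\<bar>" using x(3) by (simp add: mult_left_le)
    finally show "r \<le> \<bar>K0\<bar>" .
  qed
  have z: "l2norm (\<lambda>k::nat. 0::complex) = 0" unfolding l2norm_def by simp
  have "0 \<in> S" unfolding S_def using zero_l2 z A_zero[OF assms] by (auto intro!: exI[of _ "\<lambda>k. 0"])
  then show nn: "0 \<le> opnorm A" unfolding opnorm_def S_def[symmetric] using cSup_upper[OF _ bdd] by blast
  fix x assume x: "x \<in> l2"
  show "l2norm (A x) \<le> opnorm A * l2norm x"
  proof (cases "l2norm x = 0")
    case True
    then have "x = (\<lambda>k. 0)" using l2norm_zero x by blast
    then show ?thesis using A_zero[OF assms] z nn by simp
  next
    case False
    define r where "r = l2norm x"
    have r: "r > 0" using False l2norm_nonneg[OF x] r_def by simp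
    define x' where "x' = (\<lambda>k. of_real (1 / r) * x k)"
    have x'l2: "x' \<in> l2" unfolding x'_def by (rule scale_l2[OF x])
    have nx': "l2norm x' = 1" unfolding x'_def l2norm_scale[OF x] using r r_def by (simp add: norm_divide)
    have Ax': "A x' = (\<lambda>k. of_real (1 / r) * A x k)"
      unfolding x'_def by (rule bounded_opD(3)[OF assms x])
    have Axl2: "A x \<in> l2" by (rule bounded_opD(1)[OF assms x])
    have "l2norm (A x') \<in> S" unfolding S_def using x'l2 nx' by auto
    then have "l2norm (A x') \<le> opnorm A" unfolding opnorm_def S_def[symmetric] using cSup_upper[OF _ bdd] by blast
    then have "l2norm (A x) / r \<le> opnorm A"
      unfolding Ax' l2norm_scale[OF Axl2] using r by (simp add: norm_divide)
    then show ?thesis using r unfolding r_def by (simp add: pos_divide_le_eq)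
  qed
qed

lemma good_A:
  assumes "bounded_op A"
  shows "good N (opnorm A) (matrix_entry A)"
  unfolding good_def
proof (intro allI)
  fix x y :: "nat \<Rightarrow> complex"
  define X where "X = trunc x N"
  have AX: "A X m = (\<Sum>n<N. x n * matrix_entry A m n)" for m
    unfolding X_def A_trunc[OF assms] matrix_entry_def by simp
  have AXl2: "A X \<in> l2" unfolding X_def by (rule bounded_opD(1)[OF assms trunc_l2])
  have "(\<Sum>m<N. \<Sum>n<N. matrix_entry A m n * x n * cnj (y m)) = (\<Sum>m<N. A X m * cnj (y m))"
    unfolding AX by (simp add: sum_distrib_right sum_distrib_left mult_ac)
  also have "cmod \<dots> \<le> (\<Sum>m<N. cmod (A X m) * cmod (y m))"
    by (rule order_trans[OF norm_sum]) (simp add: norm_mult)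
  also have "\<dots> \<le> sqrt (\<Sum>m<N. (cmod (A X m))\<^sup>2) * sqrt (\<Sum>m<N. (cmod (y m))\<^sup>2)"
    by (rule cs_sqrt)
  also have "\<dots> \<le> l2norm (A X) * sqrt (\<Sum>m<N. (cmod (y m))\<^sup>2)"
  proof (rule mult_right_mono)
    show "sqrt (\<Sum>m<N. (cmod (A X m))\<^sup>2) \<le> l2norm (A X)"
      unfolding l2norm_def using AXl2 unfolding l2_def
      by (intro real_sqrt_le_mono sum_le_suminf) auto
  qed (simp add: sum_nonneg)
  also have "\<dots> \<le> opnorm A * sqrt (\<Sum>n<N. (cmod (x n))\<^sup>2) * sqrt (\<Sum>m<N. (cmod (y m))\<^sup>2)"
  proof (rule mult_right_mono)
    show "l2norm (A X) \<le> opnorm A * sqrt (\<Sum>n<N. (cmod (x n))\<^sup>2)"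
      using opnorm_facts(2)[OF assms trunc_l2] unfolding X_def l2norm_trunc .
  qed (simp add: sum_nonneg)
  finally show "cmod (\<Sum>m<N. \<Sum>n<N. matrix_entry A m n * x n * cnj (y m))
      \<le> opnorm A * sqrt (\<Sum>n<N. (cmod (x n))\<^sup>2) * sqrt (\<Sum>m<N. (cmod (y m))\<^sup>2)" .
qed

lemma good_B:
  assumes A: "bounded_op A" and dpos: "\<forall>n. d n > 0"
    and z: "\<forall>m n. d m < d n \<longrightarrow> matrix_entry A m n = 0"
  shows "good N (opnorm A) (\<lambda>m n. complex_of_real (inverse (d m)) * matrix_entry A m n * complex_of_real (d n))"
proof -
  obtain \<phi> and c :: real and k where h: "reach \<phi>" "c > 0" "k > 0" "\<forall>v\<in>d ` {..<N}. \<phi> v = k * v"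
    using reach_exists[of "d ` {..<N}"] dpos by auto
  have g: "good N (opnorm A) (\<lambda>m n. matrix_entry A m n * of_real (\<phi> (d n) / \<phi> (d m)))"
    by (rule reach_good[OF h(1) good_A[OF A]]) (use z in auto)
  show ?thesis
  proof (rule good_cong[OF g])
    fix m n assume mn: "m < N" "n < N"
    have "\<phi> (d n) / \<phi> (d m) = d n / d m" using h(3,4) mn by auto
    then show "matrix_entry A m n * of_real (\<phi> (d n) / \<phi> (d m)) =
      complex_of_real (inverse (d m)) * matrix_entry A m n * complex_of_real (d n)"
      by (simp add: divide_inverse mult_ac)
  qed
qed

lemma sqrt_trick:
  fixes T X K :: real
  assumes "0 \<le> T" "0 \<le> X" "0 \<le> K" "T \<le> K * sqrt X * sqrt T"
  shows "T \<le> K\<^sup>2 * X"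
proof (cases "T = 0")
  case True then show ?thesis using assms by simp
next
  case False
  then have st: "sqrt T > 0" using assms by simp
  have "sqrt T * sqrt T \<le> (K * sqrt X) * sqrt T" using assms(1,4) by simp
  then have le: "sqrt T \<le> K * sqrt X" by (rule mult_right_le_imp_le[OF _ st])
  have "T = (sqrt T)\<^sup>2" using assms by simp
  also have "\<dots> \<le> (K * sqrt X)\<^sup>2" using le st by (intro power_mono) auto
  also have "\<dots> = K\<^sup>2 * X" using assms by (simp add: power_mult_distrib)
  finally show ?thesis .
qed

lemma row_l2:
  fixes b :: "nat \<Rightarrow> nat \<Rightarrow> complex"
  assumes g: "\<And>N. good N K b" and K: "0 \<le> K"
  shows "summable (\<lambda>n. (cmod (b m n))\<^sup>2)"
proof (rule summableI_nonneg_bounded)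
  show "0 \<le> (cmod (b m n))\<^sup>2" for n by simp
  fix N
  define N' where "N' = N + Suc m"
  define S where "S = (\<Sum>n<N'. (cmod (b m n))\<^sup>2)"
  have mN: "m < N'" unfolding N'_def by simp
  have ce: "cnj (ebasis m m') = (if m' = m then 1 else 0)" for m' by (simp add: ebasis_def)
  have "(\<Sum>m'<N'. \<Sum>n<N'. b m' n * cnj (b m n) * cnj (ebasis m m'))
      = (\<Sum>m'<N'. if m' = m then (\<Sum>n<N'. b m n * cnj (b m n)) else 0)"
    by (intro sum.cong refl) (simp add: ce)
  also have "\<dots> = (\<Sum>n<N'. b m n * cnj (b m n))" using mN by simp
  also have "\<dots> = of_real S" by (simp only: S_def of_real_sum complex_norm_square)
  finally have eq: "(\<Sum>m'<N'. \<Sum>n<N'. b m' n * cnj (b m n) * cnj (ebasis m m')) = of_real S" .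
  have e1: "(\<Sum>m'<N'. (cmod (ebasis m m'))\<^sup>2) = 1"
  proof -
    have "(\<Sum>m'<N'. (cmod (ebasis m m'))\<^sup>2) = (\<Sum>m'<N'. if m' = m then 1 else 0)"
      by (intro sum.cong refl) (simp add: ebasis_def)
    also have "\<dots> = 1" using mN by simp
    finally show ?thesis .
  qed
  have Snn: "0 \<le> S" unfolding S_def by (simp add: sum_nonneg)
  have h1: "cmod (of_real S :: complex) \<le> K * sqrt (\<Sum>n<N'. (cmod (cnj (b m n)))\<^sup>2) * sqrt 1"
    using goodD[OF g[of N'], of "\<lambda>n. cnj (b m n)" "ebasis m"] unfolding eq e1 .
  have h2: "(\<Sum>n<N'. (cmod (cnj (b m n)))\<^sup>2) = S" by (simp add: S_def)
  have h3: "cmod (of_real S :: complex) = S" using Snn by simp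
  have "S \<le> K * sqrt S * sqrt 1" using h1 unfolding h2 h3 .
  then have "S \<le> K\<^sup>2 * 1" by (intro sqrt_trick) (use Snn K in auto)
  moreover have "(\<Sum>n<N. (cmod (b m n))\<^sup>2) \<le> S"
    unfolding S_def N'_def by (rule sum_mono2) auto
  ultimately show "(\<Sum>n<N. (cmod (b m n))\<^sup>2) \<le> K\<^sup>2" by simp
qed

lemma prod_summable:
  fixes b x :: "nat \<Rightarrow> complex"
  assumes "summable (\<lambda>n. (cmod (b n))\<^sup>2)" "summable (\<lambda>n. (cmod (x n))\<^sup>2)"
  shows "summable (\<lambda>n. b n * x n)"
proof (rule summable_comparison_test'[where N=0])
  show "summable (\<lambda>n. ((cmod (b n))\<^sup>2 + (cmod (x n))\<^sup>2) / 2)"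
    using assms by (intro summable_divide summable_add)
  fix n
  have "0 \<le> (cmod (b n) - cmod (x n))\<^sup>2" by simp
  then show "norm (b n * x n) \<le> ((cmod (b n))\<^sup>2 + (cmod (x n))\<^sup>2) / 2"
    by (simp add: norm_mult power2_eq_square algebra_simps)
qed

lemma sum_if_less:
  fixes f :: "nat \<Rightarrow> 'a::comm_monoid_add"
  assumes "M \<le> N" shows "(\<Sum>m<N. if m < M then f m else 0) = (\<Sum>m<M. f m)"
proof -
  have "{..<N} \<inter> {..<M} = {..<M}" using assms by auto
  then show ?thesis using sum.inter_restrict[of "{..<N}" f "{..<M}"] by simp
qed

lemma B_bound:
  fixes b :: "nat \<Rightarrow> nat \<Rightarrow> complex"
  fixes x :: "nat \<Rightarrow> complex"
  assumes g: "\<And>N. good N K b" and K: "0 \<le> K" and x: "summable (\<lambda>n. (cmod (x n))\<^sup>2)"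
  shows "summable (\<lambda>m. (cmod (\<Sum>n. b m n * x n))\<^sup>2) \<and>
         (\<Sum>m. (cmod (\<Sum>n. b m n * x n))\<^sup>2) \<le> K\<^sup>2 * (\<Sum>n. (cmod (x n))\<^sup>2)"
proof -
  define X where "X = (\<Sum>n. (cmod (x n))\<^sup>2)"
  define s where "s N m = (\<Sum>n<N. b m n * x n)" for N m
  have fin: "(\<Sum>m<M. (cmod (s N m))\<^sup>2) \<le> K\<^sup>2 * X" if MN: "M \<le> N" for M N
  proof -
    define y where "y m = (if m < M then s N m else 0)" for m
    define T where "T = (\<Sum>m<M. (cmod (s N m))\<^sup>2)"
    have Tnn: "0 \<le> T" unfolding T_def by (simp add: sum_nonneg)
    have "(\<Sum>m<N. \<Sum>n<N. b m n * x n * cnj (y m)) = (\<Sum>m<N. s N m * cnj (y m))"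
      unfolding s_def by (simp add: sum_distrib_right)
    also have "\<dots> = (\<Sum>m<N. if m < M then s N m * cnj (s N m) else 0)"
      unfolding y_def by (intro sum.cong refl) simp
    also have "\<dots> = (\<Sum>m<M. s N m * cnj (s N m))" by (rule sum_if_less[OF MN])
    also have "\<dots> = of_real T" by (simp only: T_def of_real_sum complex_norm_square)
    finally have e1: "(\<Sum>m<N. \<Sum>n<N. b m n * x n * cnj (y m)) = of_real T" .
    have "(\<Sum>m<N. (cmod (y m))\<^sup>2) = (\<Sum>m<N. if m < M then (cmod (s N m))\<^sup>2 else 0)"
      unfolding y_def by (intro sum.cong refl) simp
    also have "\<dots> = T" unfolding T_def by (rule sum_if_less[OF MN])
    finally have e2: "(\<Sum>m<N. (cmod (y m))\<^sup>2) = T" .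
    have h3: "cmod (of_real T :: complex) = T" using Tnn by simp
    have "T \<le> K * sqrt (\<Sum>n<N. (cmod (x n))\<^sup>2) * sqrt T"
      using goodD[OF g[of N], of x y] unfolding e1 e2 h3 .
    then have "T \<le> K\<^sup>2 * (\<Sum>n<N. (cmod (x n))\<^sup>2)"
      by (rule sqrt_trick[OF Tnn _ K, rotated]) (simp add: sum_nonneg)
    also have "\<dots> \<le> K\<^sup>2 * X" unfolding X_def
      by (intro mult_left_mono sum_le_suminf x) auto
    finally show ?thesis unfolding T_def .
  qed
  have rows: "summable (\<lambda>n. b m n * x n)" for m
    by (rule prod_summable[OF row_l2[OF g K] x])
  have lim: "(\<lambda>N. \<Sum>m<M. (cmod (s N m))\<^sup>2) \<longlonglongrightarrow> (\<Sum>m<M. (cmod (\<Sum>n. b m n * x n))\<^sup>2)" for M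
    unfolding s_def by (intro tendsto_sum tendsto_power tendsto_norm summable_LIMSEQ rows)
  have bnd: "(\<Sum>m<M. (cmod (\<Sum>n. b m n * x n))\<^sup>2) \<le> K\<^sup>2 * X" for M
    by (rule LIMSEQ_le_const2[OF lim]) (use fin in blast)
  have sm: "summable (\<lambda>m. (cmod (\<Sum>n. b m n * x n))\<^sup>2)"
    by (rule summableI_nonneg_bounded[OF _ bnd]) simp
  moreover have "(\<Sum>m. (cmod (\<Sum>n. b m n * x n))\<^sup>2) \<le> K\<^sup>2 * X"
    by (rule suminf_le_const[OF sm bnd])
  ultimately show ?thesis unfolding X_def by simp
qed

theorem mainTheorem11:
  fixes A :: "(nat \<Rightarrow> complex) \<Rightarrow> (nat \<Rightarrow> complex)"
    and d :: "nat \<Rightarrow> real"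
  assumes "bounded_op A"
    and "\<forall>n. d n > 0"
    and "\<forall>m n. d m < d n \<longrightarrow> matrix_entry A m n = 0"
  shows "\<exists>B. bounded_op B \<and>
           (\<forall>m n. matrix_entry B m n = complex_of_real (inverse (d m)) * matrix_entry A m n * complex_of_real (d n)) \<and>
           opnorm B \<le> opnorm A"
proof -
  define K where "K = opnorm A"
  define b where "b m n = complex_of_real (inverse (d m)) * matrix_entry A m n * complex_of_real (d n)" for m n
  have g: "good N K b" for N unfolding K_def b_def by (rule good_B[OF assms])
  have K: "0 \<le> K" unfolding K_def by (rule opnorm_facts(1)[OF assms(1)])
  define B where "B x = (\<lambda>m. \<Sum>n. b m n * x n)" for x :: "nat \<Rightarrow> complex"
  have rows: "summable (\<lambda>n. b m n * x n)" if "x \<in> l2" for m x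
    by (rule prod_summable[OF row_l2[OF g K]]) (use that in \<open>simp add: l2_def\<close>)
  have Bl2: "B x \<in> l2" and Bn: "l2norm (B x) \<le> K * l2norm x" if x: "x \<in> l2" for x
  proof -
    have xs: "summable (\<lambda>n. (cmod (x n))\<^sup>2)" using x by (simp add: l2_def)
    note bb = B_bound[OF g K xs]
    show "B x \<in> l2" using bb unfolding B_def l2_def by simp
    have "l2norm (B x) \<le> sqrt (K\<^sup>2 * (\<Sum>n. (cmod (x n))\<^sup>2))"
      unfolding l2norm_def B_def using bb by (intro real_sqrt_le_mono) simp
    also have "\<dots> = K * l2norm x" unfolding l2norm_def using K by (simp add: real_sqrt_mult)
    finally show "l2norm (B x) \<le> K * l2norm x" .
  qed
  have bop: "bounded_op B"
    unfolding bounded_op_def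
  proof (intro conjI ballI allI)
    show "B x \<in> l2" if "x \<in> l2" for x using Bl2 that .
    show "B (\<lambda>k. x k + y k) = (\<lambda>k. B x k + B y k)" if "x \<in> l2" "y \<in> l2" for x y
      unfolding B_def using rows[OF that(1)] rows[OF that(2)]
      by (simp add: distrib_left suminf_add)
    show "B (\<lambda>k. c * x k) = (\<lambda>k. c * B x k)" if "x \<in> l2" for x c
    proof -
      have "(\<Sum>n. b m n * (c * x n)) = c * (\<Sum>n. b m n * x n)" for m
        using suminf_mult[OF rows[OF that], of c] by (simp add: mult_ac)
      then show ?thesis unfolding B_def by simp
    qed
    show "\<exists>K. \<forall>x\<in>l2. l2norm (B x) \<le> K * l2norm x" using Bn by blast
  qed
  have me: "matrix_entry B m n = b m n" for m n
  proof -
    have "(\<lambda>k. b m k * ebasis n k) = (\<lambda>k. if k = n then b m k else 0)"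
      by (auto simp: ebasis_def)
    then have "(\<lambda>k. b m k * ebasis n k) sums b m n" using sums_single[of n "b m"] by simp
    then show ?thesis unfolding matrix_entry_def B_def by (simp add: sums_unique[symmetric])
  qed
  have on: "opnorm B \<le> K"
    unfolding opnorm_def
  proof (rule cSup_least)
    show "{l2norm (B x) |x. x \<in> l2 \<and> l2norm x \<le> 1} \<noteq> {}"
      using zero_l2 by (auto intro!: exI[of _ "\<lambda>k. 0"] simp: l2norm_def)
    fix r assume "r \<in> {l2norm (B x) |x. x \<in> l2 \<and> l2norm x \<le> 1}"
    then obtain x where x: "r = l2norm (B x)" "x \<in> l2" "l2norm x \<le> 1" by blast
    have "r \<le> K * l2norm x" using Bn x by simp
    also have "\<dots> \<le> K" using x(3) K by (simp add: mult_left_le)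
    finally show "r \<le> K" .
  qed
  show ?thesis
    by (rule exI[of _ B]) (use bop me on in \<open>simp add: b_def K_def\<close>)
qed

end
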